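(* Let $n\ge5$, $\Delta\subset B_n$ a proper ideal, and $1<k\le\lfloor\frac{n-1}2\rfloor$. Then $\mathrm{Bier}(B_n,\Delta)$ is a $k$-nearly neighborly $(n-2)$-sphere with $2n$ vertices if and only if (i) for all $A\subseteq[1,n]$, $A\in\Delta\iff[1,n]\setminus A\notin\Delta$, and (ii) every $B\subseteq[1,n]$ with $|B|\le k$ lies in $\Delta$ (and hence no $C\subseteq[1,n]$ with $|C|\ge n-k$ lies in $\Delta$).
   Context: $B_n$ is the Boolean lattice of subsets of $[1,n]$. A proper ideal $\Delta\subset B_n$ is a nonempty family of subsets of $[1,n]$ closed under taking subsets with $[1,n]\notin\Delta$. The Bier sphere $\mathrm{Bier}(B_n,\Delta)$ is the simplicial complex whose faces are the pairs $(B,C)$ with $B\subsetneq C\subseteq[1,n]$, $B\in\Delta$, $C\notin\Delta$, with $(B',C')$ a face of $(B,C)$ iff $B'\subseteq B$ and $C\subseteq C'$ (concretely the vertex set $B\sqcup\{\bar d: d\notin C\}$ on $[1,n]\sqcup\{\bar1,\dots,\bar n\}$); it is a simplicial $(n-2)$-sphere. A simplicial complex $\Gamma$ with vertex set $V$ is centrally symmetric if there is a fixed-point-free involution $\alpha$ of $V$ with $\alpha(F)$ a face for every face $F$ and $\{v,\alpha(v)\}$ not a face for all $v$. A centrally symmetric $\Gamma$ is $k$-nearly neighborly if every antipode-free vertex set (containing no pair $\{v,\alpha(v)\}$) of size at most $k$ is a face; for $k\ge2$ the involution is determined as the unique one with $\{v,\alpha(v)\}\notin\Gamma$. *)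

theory Defs
  imports Main
begin

definition proper_ideal :: "nat \<Rightarrow> nat set set \<Rightarrow> bool" where
  "proper_ideal n \<Delta> \<longleftrightarrow>
     \<Delta> \<subseteq> Pow {1..n} \<and> \<Delta> \<noteq> {} \<and>
     (\<forall>A \<in> \<Delta>. \<forall>B. B \<subseteq> A \<longrightarrow> B \<in> \<Delta>) \<and>
     {1..n} \<notin> \<Delta>"

text \<open>Vertices: Inl d stands for d, Inr d stands for bar d, for d in {1..n}.
  The face (B,C) is the vertex set B \<union> {bar d. d \<notin> C}.\<close>
definition bier :: "nat \<Rightarrow> nat set set \<Rightarrow> (nat + nat) set set" where
  "bier n \<Delta> = {Inl ` B \<union> Inr ` ({1..n} - C) | B C.
      B \<subset> C \<and> C \<subseteq> {1..n} \<and> B \<in> \<Delta> \<and> C \<notin> \<Delta>}"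

definition vertices :: "'v set set \<Rightarrow> 'v set" where
  "vertices K = {v. {v} \<in> K}"

definition centrally_symmetric_by :: "'v set set \<Rightarrow> ('v \<Rightarrow> 'v) \<Rightarrow> bool" where
  "centrally_symmetric_by K \<alpha> \<longleftrightarrow>
     (\<forall>v \<in> vertices K. \<alpha> v \<in> vertices K \<and> \<alpha> (\<alpha> v) = v \<and> \<alpha> v \<noteq> v) \<and>
     (\<forall>F \<in> K. \<alpha> ` F \<in> K) \<and>
     (\<forall>v \<in> vertices K. {v, \<alpha> v} \<notin> K)"

definition nearly_neighborly :: "nat \<Rightarrow> 'v set set \<Rightarrow> bool" where
  "nearly_neighborly k K \<longleftrightarrow>
     (\<exists>\<alpha>. centrally_symmetric_by K \<alpha> \<and>
        (\<forall>S. S \<subseteq> vertices K \<and> (\<forall>v \<in> S. \<alpha> v \<notin> S) \<and> card S \<le> k \<longrightarrow> S \<in> K))"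

end

theory Submission
  imports Defs
begin

lemma sum_set_decomp: "S = Inl ` {x. Inl x \<in> S} \<union> Inr ` {x. Inr x \<in> S}"
  by (auto, metis sumE image_eqI mem_Collect_eq)

lemma proj_simps[simp]: "{x. Inl x \<in> Inl ` A} = A" "{x. Inr x \<in> Inl ` A} = {}"
  "{x. Inr x \<in> Inr ` A} = A" "{x. Inl x \<in> Inr ` A} = {}"
  by auto

lemma proj_simps2[simp]: "{x. Inl x \<in> Inl ` B \<union> Inr ` D} = B" "{x. Inr x \<in> Inl ` B \<union> Inr ` D} = D"
  by auto

lemma pi_empty: "proper_ideal n \<Delta> \<Longrightarrow> {} \<in> \<Delta>"
  unfolding proper_ideal_def by blast

lemma bier_mem:
  assumes "proper_ideal n \<Delta>"
  shows "S \<in> bier n \<Delta> \<longleftrightarrow>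
    ({x. Inl x \<in> S} \<subseteq> {1..n} \<and> {x. Inr x \<in> S} \<subseteq> {1..n} \<and>
     {x. Inl x \<in> S} \<inter> {x. Inr x \<in> S} = {} \<and> {x. Inl x \<in> S} \<in> \<Delta> \<and>
     {1..n} - {x. Inr x \<in> S} \<notin> \<Delta>)" (is "_ \<longleftrightarrow> ?R")
proof
  assume "S \<in> bier n \<Delta>"
  then obtain B C where S: "S = Inl ` B \<union> Inr ` ({1..n} - C)" and
    h: "B \<subset> C" "C \<subseteq> {1..n}" "B \<in> \<Delta>" "C \<notin> \<Delta>"
    unfolding bier_def by blast
  have L: "{x. Inl x \<in> S} = B" and R: "{x. Inr x \<in> S} = {1..n} - C" using S by auto
  have "{1..n} - ({1..n} - C) = C" using h by auto
  then show ?R using L R h by auto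
next
  assume r: ?R
  let ?B = "{x. Inl x \<in> S}" and ?D = "{x. Inr x \<in> S}"
  have "?B \<subset> {1..n} - ?D" using r by auto
  moreover have "{1..n} - ({1..n} - ?D) = ?D" using r by auto
  ultimately show "S \<in> bier n \<Delta>" unfolding bier_def using r sum_set_decomp[of S]
    by (smt (verit) Diff_subset mem_Collect_eq)
qed

lemma card_sum_img:
  assumes "finite B" "finite D"
  shows "card (Inl ` B \<union> Inr ` D) = card B + card D"
proof -
  have "Inl ` B \<inter> Inr ` D = {}" by auto
  then show ?thesis using assms by (simp add: card_Un_disjoint card_image)
qed

lemma verts_sub:
  assumes "proper_ideal n \<Delta>"
  shows "vertices (bier n \<Delta>) \<subseteq> Inl ` {1..n} \<union> Inr ` {1..n}"
proof
  fix v assume "v \<in> vertices (bier n \<Delta>)"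
  then have "{v} \<in> bier n \<Delta>" unfolding vertices_def by simp
  then show "v \<in> Inl ` {1..n} \<union> Inr ` {1..n}" using bier_mem[OF assms, of "{v}"]
    by (cases v) auto
qed

lemma vert_Inl:
  assumes "proper_ideal n \<Delta>"
  shows "Inl d \<in> vertices (bier n \<Delta>) \<longleftrightarrow> {d} \<in> \<Delta>"
  using bier_mem[OF assms, of "{Inl d}"] assms unfolding vertices_def proper_ideal_def by auto

lemma vert_Inr:
  assumes "proper_ideal n \<Delta>"
  shows "Inr d \<in> vertices (bier n \<Delta>) \<longleftrightarrow> d \<in> {1..n} \<and> {1..n} - {d} \<notin> \<Delta>"
  using bier_mem[OF assms, of "{Inr d}"] pi_empty[OF assms] unfolding vertices_def by auto

theorem proposition16:
  fixes n k :: nat and \<Delta> :: "nat set set"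
  assumes "n \<ge> 5" and "proper_ideal n \<Delta>" and "1 < k" and "k \<le> (n - 1) div 2"
  shows "(nearly_neighborly k (bier n \<Delta>) \<and> card (vertices (bier n \<Delta>)) = 2 * n) \<longleftrightarrow>
         ((\<forall>A. A \<subseteq> {1..n} \<longrightarrow> (A \<in> \<Delta> \<longleftrightarrow> {1..n} - A \<notin> \<Delta>)) \<and>
          (\<forall>B. B \<subseteq> {1..n} \<and> card B \<le> k \<longrightarrow> B \<in> \<Delta>))"
proof
  note pi = assms(2)
  have e: "{} \<in> \<Delta>" by (rule pi_empty[OF pi])
  have full: "{1..n} \<notin> \<Delta>" and sub: "\<Delta> \<subseteq> Pow {1..n}"
    using pi unfolding proper_ideal_def by auto
  assume "nearly_neighborly k (bier n \<Delta>) \<and> card (vertices (bier n \<Delta>)) = 2 * n"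
  then obtain \<alpha> where cs: "centrally_symmetric_by (bier n \<Delta>) \<alpha>"
    and nn: "\<And>S. S \<subseteq> vertices (bier n \<Delta>) \<Longrightarrow> (\<forall>v \<in> S. \<alpha> v \<notin> S) \<Longrightarrow> card S \<le> k \<Longrightarrow> S \<in> bier n \<Delta>"
    and cv: "card (vertices (bier n \<Delta>)) = 2 * n"
    unfolding nearly_neighborly_def by blast
  have cU: "card (Inl ` {1..n} \<union> Inr ` {1..n}) = 2 * n"
    using card_sum_img[of "{1..n}" "{1..n}"] by simp
  have V: "vertices (bier n \<Delta>) = Inl ` {1..n} \<union> Inr ` {1..n}"
    by (rule card_subset_eq) (use verts_sub[OF pi] cv cU in auto)
  have cs1: "\<And>v. v \<in> vertices (bier n \<Delta>) \<Longrightarrow> \<alpha> (\<alpha> v) = v \<and> \<alpha> v \<noteq> v"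
    and cs2: "\<And>F. F \<in> bier n \<Delta> \<Longrightarrow> \<alpha> ` F \<in> bier n \<Delta>"
    using cs unfolding centrally_symmetric_by_def by auto
  have aL: "\<alpha> (Inl d) = Inr d" if d: "d \<in> {1..n}" for d
  proof (rule ccontr)
    assume ne: "\<alpha> (Inl d) \<noteq> Inr d"
    have v1: "Inl d \<in> vertices (bier n \<Delta>)" "Inr d \<in> vertices (bier n \<Delta>)" using V d by auto
    have ne2: "\<alpha> (Inr d) \<noteq> Inl d" using ne cs1[OF v1(2)] by metis
    have "{Inl d, Inr d} \<in> bier n \<Delta>"
      apply (rule nn) using v1 ne ne2 cs1[OF v1(1)] cs1[OF v1(2)] assms(3) by auto
    then show False using bier_mem[OF pi, of "{Inl d, Inr d}"] by auto
  qed
  have aL': "\<alpha> ` Inl ` A = Inr ` A" if "A \<subseteq> {1..n}" for A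
    using that aL by (force simp: image_image)
  have aR': "\<alpha> ` Inr ` A = Inl ` A" if "A \<subseteq> {1..n}" for A
  proof -
    have "\<alpha> (Inr d) = Inl d" if "d \<in> A" for d
      using aL[of d] cs1[of "Inl d"] V that \<open>A \<subseteq> {1..n}\<close> by auto
    then show ?thesis by (force simp: image_image)
  qed
  have fin: "finite (vertices (bier n \<Delta>))" using V by simp
  show "(\<forall>A. A \<subseteq> {1..n} \<longrightarrow> (A \<in> \<Delta> \<longleftrightarrow> {1..n} - A \<notin> \<Delta>)) \<and>
          (\<forall>B. B \<subseteq> {1..n} \<and> card B \<le> k \<longrightarrow> B \<in> \<Delta>)"
  proof (intro conjI allI impI)
    fix A assume A: "A \<subseteq> {1..n}"
    show "A \<in> \<Delta> \<longleftrightarrow> {1..n} - A \<notin> \<Delta>"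
    proof
      assume "A \<in> \<Delta>"
      then have "Inl ` A \<in> bier n \<Delta>" using bier_mem[OF pi, of "Inl ` A"] A full by auto
      then have "Inr ` A \<in> bier n \<Delta>" using cs2 aL'[OF A] by metis
      then show "{1..n} - A \<notin> \<Delta>" using bier_mem[OF pi, of "Inr ` A"] by auto
    next
      assume "{1..n} - A \<notin> \<Delta>"
      then have "Inr ` A \<in> bier n \<Delta>" using bier_mem[OF pi, of "Inr ` A"] A e by auto
      then have "Inl ` A \<in> bier n \<Delta>" using cs2 aR'[OF A] by metis
      then show "A \<in> \<Delta>" using bier_mem[OF pi, of "Inl ` A"] by auto
    qed
  next
    fix B assume B: "B \<subseteq> {1..n} \<and> card B \<le> k"
    have "Inl ` B \<in> bier n \<Delta>"
    proof (rule nn)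
      show "Inl ` B \<subseteq> vertices (bier n \<Delta>)" using V B by auto
      show "\<forall>v\<in>Inl ` B. \<alpha> v \<notin> Inl ` B" using aL B by auto
      show "card (Inl ` B) \<le> k" using B by (simp add: card_image)
    qed
    then show "B \<in> \<Delta>" using bier_mem[OF pi, of "Inl ` B"] by auto
  qed
next
  note pi = assms(2)
  have e: "{} \<in> \<Delta>" by (rule pi_empty[OF pi])
  have full: "{1..n} \<notin> \<Delta>" and sub: "\<Delta> \<subseteq> Pow {1..n}"
    using pi unfolding proper_ideal_def by auto
  assume "(\<forall>A. A \<subseteq> {1..n} \<longrightarrow> (A \<in> \<Delta> \<longleftrightarrow> {1..n} - A \<notin> \<Delta>)) \<and>
          (\<forall>B. B \<subseteq> {1..n} \<and> card B \<le> k \<longrightarrow> B \<in> \<Delta>)"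
  then have i: "\<And>A. A \<subseteq> {1..n} \<Longrightarrow> A \<in> \<Delta> \<longleftrightarrow> {1..n} - A \<notin> \<Delta>"
    and ii: "\<And>B. B \<subseteq> {1..n} \<Longrightarrow> card B \<le> k \<Longrightarrow> B \<in> \<Delta>" by blast+
  have V: "vertices (bier n \<Delta>) = Inl ` {1..n} \<union> Inr ` {1..n}"
  proof (rule antisym[OF verts_sub[OF pi]], rule subsetI)
    fix v assume v: "v \<in> Inl ` {1..n} \<union> Inr ` {1..n}"
    then obtain d where d: "d \<in> {1..n}" "v = Inl d \<or> v = Inr d" by auto
    have "{d} \<in> \<Delta>" using ii[of "{d}"] d assms(3) by auto
    moreover then have "{1..n} - {d} \<notin> \<Delta>" using i[of "{d}"] d by auto
    ultimately show "v \<in> vertices (bier n \<Delta>)" using d vert_Inl[OF pi] vert_Inr[OF pi] by auto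
  qed
  have cU: "card (Inl ` {1..n} \<union> Inr ` {1..n}) = 2 * n"
    using card_sum_img[of "{1..n}" "{1..n}"] by simp
  define \<alpha> :: "nat + nat \<Rightarrow> nat + nat" where "\<alpha> = case_sum Inr Inl"
  have aS: "\<alpha> ` S = Inl ` {x. Inr x \<in> S} \<union> Inr ` {x. Inl x \<in> S}" for S
  proof (rule set_eqI)
    fix y show "y \<in> \<alpha> ` S \<longleftrightarrow> y \<in> Inl ` {x. Inr x \<in> S} \<union> Inr ` {x. Inl x \<in> S}"
    proof
      assume "y \<in> \<alpha> ` S"
      then obtain z where "z \<in> S" "y = \<alpha> z" by blast
      then show "y \<in> Inl ` {x. Inr x \<in> S} \<union> Inr ` {x. Inl x \<in> S}"
        unfolding \<alpha>_def by (cases z) auto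
    next
      assume "y \<in> Inl ` {x. Inr x \<in> S} \<union> Inr ` {x. Inl x \<in> S}"
      then show "y \<in> \<alpha> ` S"
      proof
        assume "y \<in> Inl ` {x. Inr x \<in> S}"
        then obtain x where "Inr x \<in> S" "y = Inl x" by blast
        moreover have "\<alpha> (Inr x) = Inl x" unfolding \<alpha>_def by simp
        ultimately show ?thesis by (metis image_eqI)
      next
        assume "y \<in> Inr ` {x. Inl x \<in> S}"
        then obtain x where "Inl x \<in> S" "y = Inr x" by blast
        moreover have "\<alpha> (Inl x) = Inr x" unfolding \<alpha>_def by simp
        ultimately show ?thesis by (metis image_eqI)
      qed
    qed
  qed
  have cs: "centrally_symmetric_by (bier n \<Delta>) \<alpha>"
    unfolding centrally_symmetric_by_def
  proof (intro conjI ballI)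
    fix v assume "v \<in> vertices (bier n \<Delta>)"
    then obtain d where d: "d \<in> {1..n}" "v = Inl d \<or> v = Inr d" using V by blast
    then show "\<alpha> v \<in> vertices (bier n \<Delta>)" "\<alpha> (\<alpha> v) = v" "\<alpha> v \<noteq> v"
      using V unfolding \<alpha>_def by auto
    have "{Inl d, Inr d} \<notin> bier n \<Delta>"
      using bier_mem[OF pi, of "{Inl d, Inr d}"] by auto
    then show "{v, \<alpha> v} \<notin> bier n \<Delta>"
      using d unfolding \<alpha>_def by (metis insert_commute sum.simps(5) sum.simps(6))
  next
    fix F assume F: "F \<in> bier n \<Delta>"
    let ?B = "{x. Inl x \<in> F}" and ?D = "{x. Inr x \<in> F}"
    have f: "?B \<subseteq> {1..n}" "?D \<subseteq> {1..n}" "?B \<inter> ?D = {}" "?B \<in> \<Delta>" "{1..n} - ?D \<notin> \<Delta>"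
      using bier_mem[OF pi, of F] F by blast+
    have dd: "{1..n} - ({1..n} - ?D) = ?D" using f(2) by blast
    have "?D \<in> \<Delta>" using i[of "{1..n} - ?D"] f(5) unfolding dd by blast
    moreover have "{1..n} - ?B \<notin> \<Delta>" using i[of ?B] f by blast
    moreover have "?D \<inter> ?B = {}" using f(3) by blast
    ultimately have "Inl ` ?D \<union> Inr ` ?B \<in> bier n \<Delta>"
      using bier_mem[OF pi, of "Inl ` ?D \<union> Inr ` ?B"] f unfolding proj_simps2 by blast
    then show "\<alpha> ` F \<in> bier n \<Delta>" unfolding aS .
  qed
  have nn: "S \<in> bier n \<Delta>" if S: "S \<subseteq> vertices (bier n \<Delta>)" "\<forall>v \<in> S. \<alpha> v \<notin> S" "card S \<le> k" for S
  proof -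
    let ?B = "{x. Inl x \<in> S}" and ?D = "{x. Inr x \<in> S}"
    have f: "?B \<subseteq> {1..n}" "?D \<subseteq> {1..n}" using S(1) unfolding V by blast+
    have dj: "?B \<inter> ?D = {}"
    proof (rule ccontr)
      assume "?B \<inter> ?D \<noteq> {}"
      then obtain x where x: "Inl x \<in> S" "Inr x \<in> S" by blast
      have "\<alpha> (Inl x) = Inr x" unfolding \<alpha>_def by simp
      then show False using S(2) x by metis
    qed
    have fB: "finite ?B" using f(1) by (rule finite_subset) simp
    have fD: "finite ?D" using f(2) by (rule finite_subset) simp
    have "card S = card (Inl ` ?B \<union> Inr ` ?D)" using arg_cong[OF sum_set_decomp[of S], of card] .
    then have cS: "card S = card ?B + card ?D" using card_sum_img[OF fB fD] by linarith
    have "card ?B \<le> k" "card ?D \<le> k" using S(3) cS by linarith+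
    then have B1: "?B \<in> \<Delta>" and D1: "?D \<in> \<Delta>" using ii f by blast+
    have D2: "{1..n} - ?D \<notin> \<Delta>" using i[of ?D] f D1 by blast
    show ?thesis using bier_mem[OF pi, of S] f dj B1 D2 by blast
  qed
  have "nearly_neighborly k (bier n \<Delta>)" unfolding nearly_neighborly_def
    apply (rule exI[of _ \<alpha>]) using cs nn by blast
  then show "nearly_neighborly k (bier n \<Delta>) \<and> card (vertices (bier n \<Delta>)) = 2 * n"
    using V cU by simp
qed

end
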